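(* For every integer $N\ge 3$, the number of tuples $(\mu_1,\mu_2;d_1,d_2)\in P^2\times\mathbb Z^2$ with $d_1+d_2$ odd and $$2|\mu_1|+22|\mu_2|+2\binom{d_1}{2}+22\binom{d_2}{2}+d_1+11d_2=N$$ equals the number of tuples $(\alpha_1,\alpha_2;e_1,e_2)\in P^2\times\mathbb Z^2$ with $e_1+e_2$ odd and $$2|\alpha_1|+22|\alpha_2|+2\binom{e_1}{2}+22\binom{e_2}{2}+3=N.$$
   Context: $P$ denotes the set of all integer partitions into positive parts (including the empty partition); for a partition $\lambda$, $|\lambda|$ is the sum of its parts. For $d\in\mathbb Z$, $\binom{d}{2}=d(d-1)/2$. *)

theory Defs
  imports Main
begin

definition Partitions :: "nat list set" where
  "Partitions = {xs. sorted_wrt (\<ge>) xs \<and> (\<forall>x\<in>set xs. 0 < x)}"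

definition psize :: "nat list \<Rightarrow> int" where
  "psize xs = int (sum_list xs)"

definition binom2 :: "int \<Rightarrow> int" where
  "binom2 d = d * (d - 1) div 2"

end

theory Submission
  imports Defs
begin


lemma involution_sum_zero:
  fixes s :: "'a \<Rightarrow> int"
  assumes "finite S" "\<And>x. x \<in> S \<Longrightarrow> f x \<in> S" "\<And>x. x \<in> S \<Longrightarrow> f (f x) = x"
    "\<And>x. x \<in> S \<Longrightarrow> s (f x) = - s x"
  shows "sum s S = 0"
proof -
  have b: "bij_betw f S S"
    by (rule bij_betw_byWitness[where f'=f]) (use assms in auto)
  have "sum s S = sum (\<lambda>x. s (f x)) S"
    using sum.reindex_bij_betw[OF b, of s] by simp
  also have "\<dots> = - sum s S" using assms(4) by (simp add: sum_negf)
  finally show ?thesis by simp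
qed

definition gp :: "int \<Rightarrow> int" where "gp j = (3*j*j + j) div 2"

lemma gp2: "2 * gp j = 3*j*j + j"
proof -
  have "even (3*j*j + j)" by auto
  then show ?thesis unfolding gp_def by simp
qed

lemma gp_abs: "\<bar>j\<bar> \<le> gp j"
proof -
  have "2*\<bar>j\<bar> \<le> 3*j*j + j"
  proof (cases "j \<ge> 0")
    case True
    then have "j \<le> j*j" by (cases "j = 0") (auto intro: mult_le_cancel_left1[THEN iffD2] simp: )
    then show ?thesis using True by simp
  next
    case False
    then have "-j \<le> j*j" using mult_left_mono[of 1 "-j" "-j"] by simp
    then show ?thesis using False by simp
  qed
  then show ?thesis using gp2[of j] by simp
qed

lemma gp_nonneg: "0 \<le> gp j" using gp_abs[of j] by simp

lemma gp_minus1: "gp (j - 1) = gp j - 3*j + 1"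
  using gp2[of j] gp2[of "j-1"] by (simp add: algebra_simps)
lemma gp_plus1: "gp (j + 1) = gp j + 3*j + 2"
  using gp2[of j] gp2[of "j+1"] by (simp add: algebra_simps)



definition hd0 :: "nat list \<Rightarrow> nat" where "hd0 xs = (case xs of [] \<Rightarrow> 0 | a # _ \<Rightarrow> a)"

definition phi :: "int \<times> nat list \<Rightarrow> int \<times> nat list" where
"phi = (\<lambda>(j,xs). if int (length xs) + 3*j \<ge> int (hd0 xs)
   then (j-1, filter (\<lambda>x. 0<x) (nat (int (length xs) + 3*j - 1) # map (\<lambda>x. x - 1) xs))
   else (j+1, map Suc (tl xs) @ replicate (nat (int (hd0 xs) - 3*j - 2 - int (length (tl xs)))) 1))"

lemma part_cons: "a # xs \<in> Partitions \<longleftrightarrow> 0 < a \<and> (\<forall>y\<in>set xs. y \<le> a) \<and> xs \<in> Partitions"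
  unfolding Partitions_def by auto

lemma part_le_hd: "xs \<in> Partitions \<Longrightarrow> x \<in> set xs \<Longrightarrow> x \<le> hd0 xs"
  by (cases xs) (auto simp: hd0_def part_cons)

lemma part_pos: "xs \<in> Partitions \<Longrightarrow> x \<in> set xs \<Longrightarrow> 0 < x"
  unfolding Partitions_def by auto

lemma part_split:
  assumes "xs \<in> Partitions"
  shows "xs = takeWhile (\<lambda>x. 1<x) xs @ replicate (length (dropWhile (\<lambda>x. 1<x) xs)) 1"
proof -
  have "\<forall>x\<in>set (dropWhile (\<lambda>x. 1<x) xs). x = 1"
    using assms
  proof (induction xs)
    case Nil then show ?case by simp
  next
    case (Cons a xs)
    then have p: "0 < a" "\<forall>y\<in>set xs. y \<le> a" "xs \<in> Partitions" by (auto simp: part_cons)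
    show ?case
    proof (cases "1 < a")
      case True then show ?thesis using Cons p by simp
    next
      case False
      then have "a = 1" using p by simp
      moreover have "\<forall>y\<in>set xs. y = 1" using p \<open>a = 1\<close> part_pos[OF p(3)] by force
      ultimately show ?thesis using False by simp
    qed
  qed
  then have "dropWhile (\<lambda>x. 1<x) xs = replicate (length (dropWhile (\<lambda>x. 1<x) xs)) 1"
    by (simp add: replicate_length_same)
  then show ?thesis using takeWhile_dropWhile_id[of "\<lambda>x. 1<x" xs] by metis
qed

lemma part_append: "xs @ ys \<in> Partitions \<longleftrightarrow> xs \<in> Partitions \<and> ys \<in> Partitions \<and> (\<forall>x\<in>set xs. \<forall>y\<in>set ys. y \<le> x)"
  unfolding Partitions_def by (auto simp: sorted_wrt_append)

lemma part_map_minus: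
  assumes "xs \<in> Partitions" "\<forall>x\<in>set xs. 1 < x"
  shows "map (\<lambda>x. x - 1) xs \<in> Partitions"
  using assms unfolding Partitions_def by (auto simp: sorted_wrt_map elim!: sorted_wrt_mono_rel[rotated])

lemma part_map_Suc:
  assumes "xs \<in> Partitions"
  shows "map Suc xs \<in> Partitions"
  using assms unfolding Partitions_def by (auto simp: sorted_wrt_map elim!: sorted_wrt_mono_rel[rotated])

lemma part_rep1: "replicate n 1 \<in> Partitions"
  unfolding Partitions_def by (auto simp: sorted_wrt_iff_nth_less)

lemma part_tl: "xs \<in> Partitions \<Longrightarrow> tl xs \<in> Partitions"
  by (cases xs) (auto simp: part_cons)

lemma sum_ge_length: "\<forall>x\<in>set xs. (0::nat) < x \<Longrightarrow> length xs \<le> sum_list xs"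
  by (induction xs) auto

lemma sum_map_minus1: "\<forall>x\<in>set xs. (0::nat) < x \<Longrightarrow> int (sum_list (map (\<lambda>x. x - 1) xs)) = int (sum_list xs) - int (length xs)"
  by (induction xs) auto



lemma phi_case1:
  assumes xs: "xs \<in> Partitions" and c: "int (length xs) + 3*j \<ge> int (hd0 xs)"
    and nz: "int (sum_list xs) + gp j \<noteq> 0"
  defines "ys \<equiv> filter (\<lambda>x. 0<x) (nat (int (length xs) + 3*j - 1) # map (\<lambda>x. x - 1) xs)"
  shows "phi (j,xs) = (j-1, ys)" "ys \<in> Partitions"
    "int (sum_list ys) + gp (j-1) = int (sum_list xs) + gp j" "phi (j-1, ys) = (j, xs)"
proof -
  show ph: "phi (j,xs) = (j-1, ys)" using c unfolding phi_def ys_def by simp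
  define P where "P = takeWhile (\<lambda>x. 1<x) xs"
  define k where "k = length (dropWhile (\<lambda>x. 1<x) xs)"
  have xsP: "xs = P @ replicate k 1" using part_split[OF xs] unfolding P_def k_def by simp
  have Pgt: "\<forall>x\<in>set P. 1 < x" unfolding P_def by (auto dest: set_takeWhileD)
  have Ppart: "P \<in> Partitions" using xs xsP part_append by metis
  define m where "m = int (length xs) + 3*j - 1"
  have m0: "m \<ge> 0"
  proof (rule ccontr)
    assume "\<not> m \<ge> 0"
    then have "int (length xs) + 3*j = 0" "hd0 xs = 0" using c unfolding m_def by auto
    then have "xs = []" using xs by (cases xs) (auto simp: hd0_def part_cons)
    then show False using nz \<open>int (length xs) + 3*j = 0\<close> by (simp add: gp_def)
  qed
  have hdle: "\<forall>x\<in>set P. x - 1 \<le> nat m" using part_le_hd[OF xs] c unfolding m_def xsP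
    by fastforce
  have fm: "filter (\<lambda>x. 0<x) (map (\<lambda>x. x - 1) xs) = map (\<lambda>x. x - 1) P"
    using Pgt by (subst xsP) (auto simp: filter_id_conv)
  have ys: "ys = (if 0 < nat m then [nat m] else []) @ map (\<lambda>x. x - 1) P"
    unfolding ys_def m_def[symmetric] using fm by simp
  show yp: "ys \<in> Partitions" unfolding ys
    using part_map_minus[OF Ppart Pgt] hdle
    by (auto simp: part_cons Partitions_def)
  have lens: "length xs = length P + k" using xsP by simp
  have sums: "sum_list xs = sum_list P + k" using xsP by (simp add: sum_list_replicate)
  have sP: "int (sum_list (map (\<lambda>x. x - 1) P)) = int (sum_list P) - int (length P)"
    using Pgt by (intro sum_map_minus1) auto
  show "int (sum_list ys) + gp (j-1) = int (sum_list xs) + gp j"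
    unfolding ys using sP m0 lens sums by (auto simp: gp_minus1 m_def)
  show "phi (j-1, ys) = (j, xs)"
  proof (cases "0 < nat m")
    case True
    have "\<not> int (length ys) + 3*(j-1) \<ge> int (hd0 ys)"
      using True lens unfolding ys by (simp add: hd0_def m_def)
    then have "phi (j-1, ys) = (j, map Suc (tl ys) @ replicate (nat (int (hd0 ys) - 3*(j-1) - 2 - int (length (tl ys)))) 1)"
      unfolding phi_def by simp
    also have "map Suc (tl ys) = P" using True Pgt unfolding ys by (auto intro!: map_idI)
    also have "nat (int (hd0 ys) - 3*(j-1) - 2 - int (length (tl ys))) = k"
      using True lens m0 unfolding ys by (simp add: hd0_def m_def)
    finally show ?thesis using xsP by simp
  next
    case False
    then have m00: "m = 0" using m0 by simp
    then have "\<forall>x\<in>set xs. x \<le> 1" using part_le_hd[OF xs] c unfolding m_def by fastforce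
    then have "P = []" using Pgt xsP by (cases P) auto
    then have y0: "ys = []" unfolding ys using False by simp
    have "length xs = k" using lens \<open>P = []\<close> by simp
    then show ?thesis unfolding phi_def y0 using m00 \<open>P = []\<close> xsP
      by (simp add: hd0_def m_def)
  qed
qed



lemma filter_hd_tl: "xs \<in> Partitions \<Longrightarrow> filter (\<lambda>x. 0<x) (hd0 xs # tl xs) = xs"
  by (cases xs) (auto simp: hd0_def part_cons filter_id_conv Partitions_def)

lemma sum_map_Suc: "sum_list (map Suc zs) = sum_list zs + length zs"
  by (induction zs) auto

lemma phi_case2:
  assumes xs: "xs \<in> Partitions" and c: "\<not> int (length xs) + 3*j \<ge> int (hd0 xs)"
  defines "ys \<equiv> map Suc (tl xs) @ replicate (nat (int (hd0 xs) - 3*j - 2 - int (length (tl xs)))) 1"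
  shows "phi (j,xs) = (j+1, ys)" "ys \<in> Partitions"
    "int (sum_list ys) + gp (j+1) = int (sum_list xs) + gp j" "phi (j+1, ys) = (j, xs)"
proof -
  show "phi (j,xs) = (j+1, ys)" using c unfolding phi_def ys_def by simp
  define r where "r = int (hd0 xs) - 3*j - 2 - int (length (tl xs))"
  have r0: "r \<ge> 0"
    using c unfolding r_def by (cases xs) (auto simp: hd0_def)
  have tp: "tl xs \<in> Partitions" using part_tl[OF xs] .
  show "ys \<in> Partitions" unfolding ys_def
    using part_map_Suc[OF tp] part_rep1 by (auto simp: part_append)
  have sx: "sum_list xs = hd0 xs + sum_list (tl xs)" by (cases xs) (auto simp: hd0_def)
  have "sum_list (map Suc (tl xs)) = sum_list (tl xs) + length (tl xs)"
    by (rule sum_map_Suc)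
  then show "int (sum_list ys) + gp (j+1) = int (sum_list xs) + gp j"
    unfolding ys_def r_def[symmetric] using r0 sx r_def by (simp add: sum_list_replicate gp_plus1)
  have ly: "int (length ys) = int (hd0 xs) - 3*j - 2" unfolding ys_def r_def[symmetric] using r0 r_def by simp
  have hy: "hd0 ys \<le> hd0 xs + 1"
  proof (cases "tl xs")
    case Nil then show ?thesis unfolding ys_def by (cases "nat r") (auto simp: hd0_def r_def)
  next
    case (Cons b rest)
    then have "b \<le> hd0 xs" using part_le_hd[OF xs, of b] by (cases xs) auto
    then show ?thesis unfolding ys_def using Cons by (simp add: hd0_def)
  qed
  have "int (length ys) + 3*(j+1) \<ge> int (hd0 ys)" using ly hy by simp
  then have "phi (j+1, ys) = (j, filter (\<lambda>x. 0<x) (nat (int (length ys) + 3*(j+1) - 1) # map (\<lambda>x. x - 1) ys))"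
    unfolding phi_def by simp
  also have "nat (int (length ys) + 3*(j+1) - 1) = hd0 xs" using ly by simp
  also have "map (\<lambda>x. x - 1) ys = tl xs @ replicate (nat r) 0" unfolding ys_def r_def
    by (simp add: map_replicate_const comp_def)
  also have "filter (\<lambda>x. 0<x) (hd0 xs # tl xs @ replicate (nat r) 0) = filter (\<lambda>x. 0<x) (hd0 xs # tl xs)"
    by simp
  finally show "phi (j+1, ys) = (j, xs)" using filter_hd_tl[OF xs] by simp
qed

lemma phi_props:
  assumes xs: "xs \<in> Partitions" and nz: "int (sum_list xs) + gp j \<noteq> 0"
  shows "snd (phi (j,xs)) \<in> Partitions"
    "int (sum_list (snd (phi (j,xs)))) + gp (fst (phi (j,xs))) = int (sum_list xs) + gp j"
    "phi (phi (j,xs)) = (j, xs)"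
    "fst (phi (j,xs)) = j - 1 \<or> fst (phi (j,xs)) = j + 1"
proof -
  have "snd (phi (j,xs)) \<in> Partitions \<and>
    int (sum_list (snd (phi (j,xs)))) + gp (fst (phi (j,xs))) = int (sum_list xs) + gp j \<and>
    phi (phi (j,xs)) = (j, xs) \<and> (fst (phi (j,xs)) = j - 1 \<or> fst (phi (j,xs)) = j + 1)"
  proof (cases "int (length xs) + 3*j \<ge> int (hd0 xs)")
    case True
    show ?thesis using phi_case1[OF xs True nz] by simp
  next
    case False
    show ?thesis using phi_case2[OF xs False] by simp
  qed
  then show "snd (phi (j,xs)) \<in> Partitions"
    "int (sum_list (snd (phi (j,xs)))) + gp (fst (phi (j,xs))) = int (sum_list xs) + gp j"
    "phi (phi (j,xs)) = (j, xs)"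
    "fst (phi (j,xs)) = j - 1 \<or> fst (phi (j,xs)) = j + 1" by auto
qed



definition Aset :: "int \<Rightarrow> (int \<times> int) set" where
  "Aset n = {(d1,d2). odd (d1+d2) \<and> d1*d1 + 11*(d2*d2) = n}"
definition Bset :: "int \<Rightarrow> (int \<times> int) set" where
  "Bset n = {(e1,e2). odd (e1+e2) \<and> e1*(e1-1) + 11*(e2*(e2-1)) + 3 = n}"
definition Pt :: "int \<Rightarrow> (int \<times> int) set" where
  "Pt n = {(j,k). 1 + 2*gp j + 22*gp k = n}"
definition Tn :: "int \<Rightarrow> (int \<times> int) set" where
  "Tn n = {(X,Y). X*X + 11*(Y*Y) = 12*n}"

lemma abs_le_sq: "\<bar>x::int\<bar> \<le> x*x"
proof (cases "x = 0")
  case False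
  then have "1 \<le> \<bar>x\<bar>" by simp
  then have "\<bar>x\<bar> * 1 \<le> \<bar>x\<bar> * \<bar>x\<bar>" by (intro mult_left_mono) auto
  then show ?thesis by (simp add: abs_mult[symmetric])
qed simp

lemma finite_Tn: "finite (Tn n)"
proof -
  have "Tn n \<subseteq> {-12*\<bar>n\<bar>..12*\<bar>n\<bar>} \<times> {-12*\<bar>n\<bar>..12*\<bar>n\<bar>}"
  proof
    fix p assume "p \<in> Tn n"
    then obtain X Y where p: "p = (X,Y)" "X*X + 11*(Y*Y) = 12*n" unfolding Tn_def by auto
    have "0 \<le> X*X" "0 \<le> Y*Y" by auto
    then have "\<bar>X\<bar> \<le> 12*\<bar>n\<bar>" "\<bar>Y\<bar> \<le> 12*\<bar>n\<bar>" using abs_le_sq[of X] abs_le_sq[of Y] p(2) by linarith+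
    then show "p \<in> {-12*\<bar>n\<bar>..12*\<bar>n\<bar>} \<times> {-12*\<bar>n\<bar>..12*\<bar>n\<bar>}" using p(1) by auto
  qed
  then show ?thesis by (rule finite_subset) auto
qed

lemma finite_Pt: "finite (Pt n)"
proof -
  have "Pt n \<subseteq> {-\<bar>n\<bar>..\<bar>n\<bar>} \<times> {-\<bar>n\<bar>..\<bar>n\<bar>}"
  proof
    fix p assume "p \<in> Pt n"
    then obtain j k where p: "p = (j,k)" "1 + 2*gp j + 22*gp k = n" unfolding Pt_def by auto
    then have "\<bar>j\<bar> \<le> \<bar>n\<bar>" "\<bar>k\<bar> \<le> \<bar>n\<bar>" using gp_abs[of j] gp_abs[of k] by linarith+
    then show "p \<in> {-\<bar>n\<bar>..\<bar>n\<bar>} \<times> {-\<bar>n\<bar>..\<bar>n\<bar>}" using p(1) by auto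
  qed
  then show ?thesis by (rule finite_subset) auto
qed

definition "U n = {(X,Y)\<in>Tn n. odd Y \<and> (Y - X) mod 12 = 0}"
definition "V n = {(X,Y)\<in>Tn n. odd Y \<and> (X + Y) mod 12 = 6}"

lemma card_A: "card (Aset n) = card (U n)"
proof (rule bij_betw_same_card[of "\<lambda>(d1,d2). (d1 - 11*d2, d1 + d2)"],
       rule bij_betw_byWitness[where f'="\<lambda>(X,Y). (Y - (Y-X) div 12, (Y-X) div 12)"])
  show "\<forall>a\<in>Aset n. (\<lambda>(X,Y). (Y - (Y-X) div 12, (Y-X) div 12)) ((\<lambda>(d1,d2). (d1 - 11*d2, d1 + d2)) a) = a"
    by auto
  show "\<forall>a\<in>U n. (\<lambda>(d1,d2). (d1 - 11*d2, d1 + d2)) ((\<lambda>(X,Y). (Y - (Y-X) div 12, (Y-X) div 12)) a) = a"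
    unfolding U_def by auto
  show "(\<lambda>(d1,d2). (d1 - 11*d2, d1 + d2)) ` Aset n \<subseteq> U n"
  proof clarify
    fix d1 d2 assume "(d1,d2) \<in> Aset n"
    then have h: "odd (d1+d2)" "d1*d1 + 11*(d2*d2) = n" unfolding Aset_def by auto
    have "(d1 - 11*d2)*(d1 - 11*d2) + 11*((d1+d2)*(d1+d2)) = 12*(d1*d1 + 11*(d2*d2))"
      by (simp add: algebra_simps)
    then show "(d1 - 11*d2, d1 + d2) \<in> U n" using h unfolding U_def Tn_def by auto
  qed
  show "(\<lambda>(X,Y). (Y - (Y-X) div 12, (Y-X) div 12)) ` U n \<subseteq> Aset n"
  proof clarify
    fix X Y assume "(X,Y) \<in> U n"
    then have h: "odd Y" "(Y - X) mod 12 = 0" "X*X + 11*(Y*Y) = 12*n" unfolding U_def Tn_def by auto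
    define d where "d = (Y - X) div 12"
    have Xd: "X = Y - 12*d" using h(2) unfolding d_def by presburger
    have "12*((Y - d)*(Y - d) + 11*(d*d)) = X*X + 11*(Y*Y)"
      unfolding Xd by (simp add: algebra_simps)
    then have "(Y - d)*(Y - d) + 11*(d*d) = n" using h(3) by simp
    moreover have "odd (Y - d + d)" using h(1) by simp
    ultimately show "(Y - (Y-X) div 12, (Y-X) div 12) \<in> Aset n" unfolding Aset_def d_def by simp
  qed
qed

lemma card_B: "card (Bset n) = card (V n)"
proof (rule bij_betw_same_card[of "\<lambda>(e1,e2). (e1 + 11*e2 - 6, e2 - e1)"],
       rule bij_betw_byWitness[where f'="\<lambda>(X,Y). ((X+Y+6) div 12 - Y, (X+Y+6) div 12)"])
  show "\<forall>a\<in>Bset n. (\<lambda>(X,Y). ((X+Y+6) div 12 - Y, (X+Y+6) div 12)) ((\<lambda>(e1,e2). (e1 + 11*e2 - 6, e2 - e1)) a) = a"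
    by auto
  show "\<forall>a\<in>V n. (\<lambda>(e1,e2). (e1 + 11*e2 - 6, e2 - e1)) ((\<lambda>(X,Y). ((X+Y+6) div 12 - Y, (X+Y+6) div 12)) a) = a"
    unfolding V_def by auto presburger+
  show "(\<lambda>(e1,e2). (e1 + 11*e2 - 6, e2 - e1)) ` Bset n \<subseteq> V n"
  proof clarify
    fix e1 e2 assume "(e1,e2) \<in> Bset n"
    then have h: "odd (e1+e2)" "e1*(e1-1) + 11*(e2*(e2-1)) + 3 = n" unfolding Bset_def by auto
    have "(e1 + 11*e2 - 6)*(e1 + 11*e2 - 6) + 11*((e2-e1)*(e2-e1)) = 12*(e1*(e1-1) + 11*(e2*(e2-1)) + 3)"
      by (simp add: algebra_simps)
    moreover have "odd (e2 - e1)" using h(1) by presburger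
    moreover have "(e1 + 11*e2 - 6 + (e2 - e1)) mod 12 = 6" by presburger
    ultimately show "(e1 + 11*e2 - 6, e2 - e1) \<in> V n" using h unfolding V_def Tn_def by auto
  qed
  show "(\<lambda>(X,Y). ((X+Y+6) div 12 - Y, (X+Y+6) div 12)) ` V n \<subseteq> Bset n"
  proof clarify
    fix X Y assume "(X,Y) \<in> V n"
    then have h: "odd Y" "(X + Y) mod 12 = 6" "X*X + 11*(Y*Y) = 12*n" unfolding V_def Tn_def by auto
    define e where "e = (X+Y+6) div 12"
    have Xe: "X = 12*e - 6 - Y" using h(2) unfolding e_def by presburger
    have "12*((e - Y)*((e - Y)-1) + 11*(e*(e-1)) + 3) = X*X + 11*(Y*Y)"
      unfolding Xe by (simp add: algebra_simps)
    then have "(e - Y)*((e - Y)-1) + 11*(e*(e-1)) + 3 = n" using h(3) by simp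
    moreover have "odd (e - Y + e)" using h(1) by presburger
    ultimately show "((X+Y+6) div 12 - Y, (X+Y+6) div 12) \<in> Bset n" unfolding Bset_def e_def by simp
  qed
qed



lemma sq_mod3: "(Y::int) mod 3 \<noteq> 0 \<Longrightarrow> (Y*Y) mod 3 = 1"
proof -
  assume a: "Y mod 3 \<noteq> 0"
  have "(Y*Y) mod 3 = ((Y mod 3)*(Y mod 3)) mod 3" by (simp add: mod_mult_eq)
  moreover have "Y mod 3 = 1 \<or> Y mod 3 = 2" using a by presburger
  ultimately show ?thesis by auto
qed

lemma Tn_mod3: assumes "(X,Y) \<in> Tn n" "X mod 3 = 0" shows "Y mod 3 = 0"
proof (rule ccontr)
  assume "Y mod 3 \<noteq> 0"
  then have z: "(Y*Y) mod 3 = 1" by (rule sq_mod3)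
  have "(X*X) mod 3 = ((X mod 3)*(X mod 3)) mod 3" by (simp add: mod_mult_eq)
  then have w: "(X*X) mod 3 = 0" using assms(2) by simp
  have e: "X*X + 11*(Y*Y) = 12*n" using assms(1) unfolding Tn_def by auto
  define W where "W = X*X"
  define Z where "Z = Y*Y"
  have "W + 11*Z = 12*n" "W mod 3 = 0" "Z mod 3 = 1" using e w z unfolding W_def Z_def by auto
  then show False by presburger
qed

definition "Pe n = {(j,k)\<in>Pt n. even (j+k)}"
definition "Po n = {(j,k)\<in>Pt n. odd (j+k)}"

lemma pent_eq: "1 + 2*gp j + 22*gp k = n \<longleftrightarrow> (6*j+1)*(6*j+1) + 11*((6*k+1)*(6*k+1)) = 12*n"
proof -
  have "(6*j+1)*(6*j+1) + 11*((6*k+1)*(6*k+1)) = 12*(1 + 2*gp j + 22*gp k)"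
    using gp2[of j] gp2[of k] by (simp add: algebra_simps)
  then show ?thesis by auto
qed

definition "U1 n = {(X,Y)\<in>U n. X mod 6 = 1}"
definition "U2 n = {(X,Y)\<in>U n. X mod 6 = 5}"
definition "V1 n = {(X,Y)\<in>V n. X mod 6 = 1}"
definition "V2 n = {(X,Y)\<in>V n. X mod 6 = 5}"

lemma card_U1: "card (Pe n) = card (U1 n)"
proof (rule bij_betw_same_card[of "\<lambda>(j,k). (6*j+1, 6*k+1)"],
       rule bij_betw_byWitness[where f'="\<lambda>(X,Y). ((X-1) div 6, (Y-1) div 6)"])
  show "\<forall>a\<in>Pe n. (\<lambda>(X,Y). ((X-1) div 6, (Y-1) div 6)) ((\<lambda>(j,k). (6*j+1, 6*k+1)) a) = a" by auto
  show "\<forall>a\<in>U1 n. (\<lambda>(j,k). (6*j+1, 6*k+1)) ((\<lambda>(X,Y). ((X-1) div 6, (Y-1) div 6)) a) = a"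
    unfolding U1_def U_def by (auto; presburger)
  show "(\<lambda>(j,k). (6*j+1, 6*k+1)) ` Pe n \<subseteq> U1 n"
  proof clarify
    fix j k assume "(j,k) \<in> Pe n"
    then have h: "1 + 2*gp j + 22*gp k = n" "even (j+k)" unfolding Pe_def Pt_def by auto
    have "(6*k+1 - (6*j+1)) mod 12 = 0" using h(2) by presburger
    moreover have "odd (6*k+1)" "(6*j+1) mod 6 = 1" by presburger+
    ultimately show "(6*j+1, 6*k+1) \<in> U1 n"
      using h(1) unfolding U1_def U_def Tn_def pent_eq by auto
  qed
  show "(\<lambda>(X,Y). ((X-1) div 6, (Y-1) div 6)) ` U1 n \<subseteq> Pe n"
  proof clarify
    fix X Y assume "(X,Y) \<in> U1 n"
    then have h: "(Y - X) mod 12 = 0" "X*X + 11*(Y*Y) = 12*n" "X mod 6 = 1" unfolding U1_def U_def Tn_def by auto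
    define a where "a = (X-1) div 6"
    define b where "b = (Y-1) div 6"
    have x: "X = 6*a+1" using h(3) unfolding a_def by presburger
    have y: "Y = 6*b+1" using h(1) h(3) unfolding b_def by presburger
    have "even (a + b)" using h(1) x y by presburger
    moreover have "1 + 2*gp a + 22*gp b = n"
      unfolding pent_eq using h(2) by (simp add: x y)
    ultimately have "(a,b) \<in> Pe n" unfolding Pe_def Pt_def by auto
    then show "((X-1) div 6, (Y-1) div 6) \<in> Pe n" unfolding a_def b_def .
  qed
qed

lemma neg_mem_U: "(X,Y) \<in> U n \<Longrightarrow> (-X,-Y) \<in> U n"
proof -
  assume "(X,Y) \<in> U n"
  then have "odd Y" "(Y - X) mod 12 = 0" "X*X + 11*(Y*Y) = 12*n" unfolding U_def Tn_def by auto
  moreover have "(-Y - -X) mod 12 = 0" "(X - Y) mod 12 = 0" using calculation(2) by presburger+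
  ultimately show ?thesis unfolding U_def Tn_def by auto
qed

lemma neg_mem_V: "(X,Y) \<in> V n \<Longrightarrow> (-X,-Y) \<in> V n"
proof -
  assume "(X,Y) \<in> V n"
  then have "odd Y" "(X + Y) mod 12 = 6" "X*X + 11*(Y*Y) = 12*n" unfolding V_def Tn_def by auto
  moreover have "(-X + -Y) mod 12 = 6" "(-Y - X) mod 12 = 6" "(-X - Y) mod 12 = 6" using calculation(2) by presburger+
  ultimately show ?thesis unfolding V_def Tn_def by auto
qed

lemma m15: "(X::int) mod 6 = 5 \<longleftrightarrow> (-X) mod 6 = 1" by presburger

lemma card_U2: "card (U2 n) = card (U1 n)"
proof (rule bij_betw_same_card[of "\<lambda>(X,Y). (-X, -Y)"],
       rule bij_betw_byWitness[where f'="\<lambda>(X,Y). (-X, -Y)"])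
  show "(\<lambda>(X,Y). (-X, -Y)) ` U2 n \<subseteq> U1 n"
    unfolding U1_def U2_def using neg_mem_U m15 by auto
  show "(\<lambda>(X,Y). (-X, -Y)) ` U1 n \<subseteq> U2 n"
    unfolding U1_def U2_def using neg_mem_U m15 by fastforce
qed auto

lemma card_V1: "card (Po n) = card (V1 n)"
proof (rule bij_betw_same_card[of "\<lambda>(j,k). (6*j+1, -(6*k+1))"],
       rule bij_betw_byWitness[where f'="\<lambda>(X,Y). ((X-1) div 6, (-Y-1) div 6)"])
  show "\<forall>a\<in>Po n. (\<lambda>(X,Y). ((X-1) div 6, (-Y-1) div 6)) ((\<lambda>(j,k). (6*j+1, -(6*k+1))) a) = a" by auto
  show "\<forall>a\<in>V1 n. (\<lambda>(j,k). (6*j+1, -(6*k+1))) ((\<lambda>(X,Y). ((X-1) div 6, (-Y-1) div 6)) a) = a"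
    unfolding V1_def V_def by (auto; presburger)
  show "(\<lambda>(j,k). (6*j+1, -(6*k+1))) ` Po n \<subseteq> V1 n"
  proof clarify
    fix j k assume "(j,k) \<in> Po n"
    then have h: "1 + 2*gp j + 22*gp k = n" "odd (j+k)" unfolding Po_def Pt_def by auto
    have "(6*j+1 + -(6*k+1)) mod 12 = 6" using h(2) by presburger
    moreover have "odd (-(6*k+1))" by presburger
    moreover have "(6*j+1) mod 6 = 1" by presburger
    moreover have "(6*j+1)*(6*j+1) + 11*((-(6*k+1))*(-(6*k+1))) = 12*n" using h(1) unfolding pent_eq minus_mult_minus by simp
    ultimately show "(6*j+1, -(6*k+1)) \<in> V1 n"
      unfolding V1_def V_def Tn_def by auto
  qed
  show "(\<lambda>(X,Y). ((X-1) div 6, (-Y-1) div 6)) ` V1 n \<subseteq> Po n"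
  proof clarify
    fix X Y assume "(X,Y) \<in> V1 n"
    then have h: "(X + Y) mod 12 = 6" "X*X + 11*(Y*Y) = 12*n" "X mod 6 = 1" unfolding V1_def V_def Tn_def by auto
    define a where "a = (X-1) div 6"
    define b where "b = (-Y-1) div 6"
    have x: "X = 6*a+1" using h(3) unfolding a_def by presburger
    have y: "Y = -(6*b+1)" using h(1) h(3) unfolding b_def by presburger
    have "odd (a + b)" using h(1) x y by presburger
    moreover have "1 + 2*gp a + 22*gp b = n"
      unfolding pent_eq using h(2) by (simp add: x y algebra_simps)
    ultimately have "(a,b) \<in> Po n" unfolding Po_def Pt_def by auto
    then show "((X-1) div 6, (-Y-1) div 6) \<in> Po n" unfolding a_def b_def .
  qed
qed

lemma card_V2: "card (V2 n) = card (V1 n)"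
proof (rule bij_betw_same_card[of "\<lambda>(X,Y). (-X, -Y)"],
       rule bij_betw_byWitness[where f'="\<lambda>(X,Y). (-X, -Y)"])
  show "(\<lambda>(X,Y). (-X, -Y)) ` V2 n \<subseteq> V1 n"
    unfolding V1_def V2_def using neg_mem_V m15 by auto
  show "(\<lambda>(X,Y). (-X, -Y)) ` V1 n \<subseteq> V2 n"
    unfolding V1_def V2_def using neg_mem_V m15 by fastforce
qed auto



definition "U0 n = {(X,Y)\<in>U n. X mod 6 = 3}"
definition "V0 n = {(X,Y)\<in>V n. X mod 6 = 3}"

lemma U0_V0: "U0 n = V0 n"
proof -
  have "((Y - X) mod 12 = 0 \<longleftrightarrow> (X + Y) mod 12 = 6) \<and> (12 dvd (Y - X) \<longleftrightarrow> (X + Y) mod 12 = 6)" if "(X,Y) \<in> Tn n" "odd Y" "X mod 6 = 3" for X Y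
  proof -
    have "X mod 3 = 0" using that(3) by presburger
    then have "Y mod 3 = 0" using Tn_mod3[OF that(1)] by simp
    then show ?thesis using that(2,3) by presburger
  qed
  then show ?thesis unfolding U0_def V0_def U_def V_def by blast
qed

lemma card_U_split: "card (U n) = card (U1 n) + card (U2 n) + card (U0 n)"
proof -
  have fin: "finite (U n)" using finite_Tn[of n] unfolding U_def by (rule finite_subset[rotated]) auto
  have "U n = (U1 n \<union> U2 n) \<union> U0 n"
  proof -
    have "X mod 6 = 1 \<or> X mod 6 = 5 \<or> X mod 6 = 3" if "(X,Y) \<in> U n" for X Y
    proof -
      have "odd Y" "(Y - X) mod 12 = 0" using that unfolding U_def by auto
      then show ?thesis by presburger
    qed
    then show ?thesis unfolding U1_def U2_def U0_def by auto
  qed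
  moreover have "finite (U1 n)" "finite (U2 n)" "finite (U0 n)"
    using fin unfolding U1_def U2_def U0_def by (auto intro: finite_subset[rotated])
  moreover have "U1 n \<inter> U2 n = {}" "(U1 n \<union> U2 n) \<inter> U0 n = {}"
    unfolding U1_def U2_def U0_def by auto
  ultimately show ?thesis by (simp add: card_Un_disjoint)
qed

lemma card_V_split: "card (V n) = card (V1 n) + card (V2 n) + card (V0 n)"
proof -
  have fin: "finite (V n)" using finite_Tn[of n] unfolding V_def by (rule finite_subset[rotated]) auto
  have "V n = (V1 n \<union> V2 n) \<union> V0 n"
  proof -
    have "X mod 6 = 1 \<or> X mod 6 = 5 \<or> X mod 6 = 3" if "(X,Y) \<in> V n" for X Y
    proof -
      have "odd Y" "(X + Y) mod 12 = 6" using that unfolding V_def by auto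
      then show ?thesis by presburger
    qed
    then show ?thesis unfolding V1_def V2_def V0_def by auto
  qed
  moreover have "finite (V1 n)" "finite (V2 n)" "finite (V0 n)"
    using fin unfolding V1_def V2_def V0_def by (auto intro: finite_subset[rotated])
  moreover have "V1 n \<inter> V2 n = {}" "(V1 n \<union> V2 n) \<inter> V0 n = {}"
    unfolding V1_def V2_def V0_def by auto
  ultimately show ?thesis by (simp add: card_Un_disjoint)
qed

definition sg :: "int \<times> int \<Rightarrow> int" where "sg = (\<lambda>(j,k). if even (j+k) then 1 else -1)"

lemma sum_Pt: "sum sg (Pt n) = int (card (Pe n)) - int (card (Po n))"
proof -
  have "Pt n = Pe n \<union> Po n" unfolding Pe_def Po_def by auto
  moreover have "Pe n \<inter> Po n = {}" unfolding Pe_def Po_def by auto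
  moreover have "finite (Pe n)" "finite (Po n)"
    using finite_Pt[of n] unfolding Pe_def Po_def by (auto intro: finite_subset[rotated])
  moreover have "sum sg (Pe n) = int (card (Pe n))" unfolding Pe_def sg_def
    by (subst sum.cong[where h="\<lambda>_. 1"]) auto
  moreover have "sum sg (Po n) = - int (card (Po n))" unfolding Po_def sg_def
    by (subst sum.cong[where h="\<lambda>_. -1"]) auto
  ultimately show ?thesis by (simp add: sum.union_disjoint)
qed

lemma lattice_identity:
  "int (card (Aset n)) - int (card (Bset n)) = 2 * sum sg (Pt n)"
  unfolding sum_Pt card_A card_B card_U_split card_V_split U0_V0
    card_U2 card_V2 card_U1[symmetric] card_V1[symmetric] by simp



lemma finite_parts: "finite {xs\<in>Partitions. psize xs \<le> K}"
proof -
  have "{xs\<in>Partitions. psize xs \<le> K} \<subseteq> {xs. set xs \<subseteq> {0..nat K} \<and> length xs \<le> nat K}"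
  proof clarify
    fix xs assume xs: "xs \<in> Partitions" "psize xs \<le> K"
    have "length xs \<le> sum_list xs" using sum_ge_length part_pos[OF xs(1)] by blast
    moreover have "x \<le> nat K" if "x \<in> set xs" for x
    proof -
      have "x \<le> sum_list xs" using member_le_sum_list[OF that] by simp
      then have "int x \<le> int (sum_list xs)" by simp
      then show ?thesis using xs(2) unfolding psize_def by linarith
    qed
    moreover have "int (length xs) \<le> int (sum_list xs)" using calculation(1) by simp
    then have "length xs \<le> nat K" using xs(2) unfolding psize_def by linarith
    ultimately show "set xs \<subseteq> {0..nat K} \<and> length xs \<le> nat K" by auto
  qed
  then show ?thesis by (rule finite_subset) (rule finite_lists_length_le, simp)
qed

definition "Mset N = {(m1,m2). m1 \<in> Partitions \<and> m2 \<in> Partitions \<and> 2*psize m1 + 22*psize m2 \<le> N}"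

lemma finite_Mset: "finite (Mset N)"
proof -
  have "Mset N \<subseteq> {xs\<in>Partitions. psize xs \<le> N} \<times> {xs\<in>Partitions. psize xs \<le> N}"
    unfolding Mset_def psize_def by auto
  then show ?thesis by (rule finite_subset[OF _ finite_cartesian_product[OF finite_parts finite_parts]])
qed

definition "Wset N = Sigma (Mset N) (\<lambda>(m1,m2). Pt (N - 2*psize m1 - 22*psize m2))"

definition Phi :: "(nat list \<times> nat list) \<times> (int \<times> int) \<Rightarrow> (nat list \<times> nat list) \<times> (int \<times> int)" where
  "Phi = (\<lambda>((m1,m2),(j,k)). if psize m1 + gp j \<noteq> 0
     then ((snd (phi (j,m1)), m2), (fst (phi (j,m1)), k))
     else ((m1, snd (phi (k,m2))), (j, fst (phi (k,m2)))))"

lemma psize_nonneg: "0 \<le> psize xs" unfolding psize_def by simp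

lemma Phi_props:
  assumes "N \<noteq> 1" and x: "x \<in> Wset N"
  shows "Phi x \<in> Wset N \<and> Phi (Phi x) = x \<and> sg (snd (Phi x)) = - sg (snd x)"
proof -
  obtain m1 m2 j k where xd: "x = ((m1,m2),(j,k))" by (metis prod.exhaust)
  have h: "m1 \<in> Partitions" "m2 \<in> Partitions" "2*psize m1 + 22*psize m2 \<le> N"
    "1 + 2*gp j + 22*gp k = N - 2*psize m1 - 22*psize m2"
    using x unfolding xd Wset_def Mset_def Pt_def by auto
  show "Phi x \<in> Wset N \<and> Phi (Phi x) = x \<and> sg (snd (Phi x)) = - sg (snd x)"
  proof (cases "psize m1 + gp j \<noteq> 0")
    case True
    note pp = phi_props[OF h(1), of j]
    have nz: "int (sum_list m1) + gp j \<noteq> 0" using True unfolding psize_def .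
    obtain j' m1' where e: "phi (j,m1) = (j',m1')" by (metis prod.exhaust)
    have p: "m1' \<in> Partitions" "psize m1' + gp j' = psize m1 + gp j" "phi (j',m1') = (j,m1)"
      "j' = j - 1 \<or> j' = j + 1"
      using pp[OF nz] unfolding e psize_def by auto
    have Px: "Phi x = ((m1',m2),(j',k))" unfolding xd Phi_def using True e by simp
    have "psize m1' + gp j' \<noteq> 0" using p(2) True by simp
    then have "Phi ((m1',m2),(j',k)) = ((m1,m2),(j,k))" unfolding Phi_def using p(3) by simp
    then have PPx: "Phi (Phi x) = x" using Px xd by simp
    have "Phi x \<in> Wset N" unfolding Px Wset_def Mset_def Pt_def
      using h p gp_nonneg[of j'] gp_nonneg[of k] psize_nonneg[of m2] by auto
    moreover have "sg (snd (Phi x)) = - sg (snd x)" unfolding Px using p(4) by (auto simp: xd sg_def)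
    ultimately show ?thesis using PPx by simp
  next
    case False
    then have z: "psize m1 + gp j = 0" by simp
    note pp = phi_props[OF h(2), of k]
    have "psize m2 + gp k \<noteq> 0" using assms h(4) z by auto
    then have nz: "int (sum_list m2) + gp k \<noteq> 0" unfolding psize_def .
    obtain k' m2' where e: "phi (k,m2) = (k',m2')" by (metis prod.exhaust)
    have p: "m2' \<in> Partitions" "psize m2' + gp k' = psize m2 + gp k" "phi (k',m2') = (k,m2)"
      "k' = k - 1 \<or> k' = k + 1"
      using pp[OF nz] unfolding e psize_def by auto
    have Px: "Phi x = ((m1,m2'),(j,k'))" unfolding xd Phi_def using False e by simp
    have "Phi ((m1,m2'),(j,k')) = ((m1,m2),(j,k))" unfolding Phi_def using p(3) z by simp
    then have PPx: "Phi (Phi x) = x" using Px xd by simp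
    have "Phi x \<in> Wset N" unfolding Px Wset_def Mset_def Pt_def
      using h p gp_nonneg[of j] gp_nonneg[of k'] psize_nonneg[of m1] by auto
    moreover have "sg (snd (Phi x)) = - sg (snd x)" unfolding Px using p(4) by (auto simp: xd sg_def)
    ultimately show ?thesis using PPx by simp
  qed
qed

lemma Wset_sum_zero:
  assumes "N \<noteq> 1"
  shows "(\<Sum>x\<in>Wset N. sg (snd x)) = 0"
proof (rule involution_sum_zero[where f = Phi])
  show "finite (Wset N)" unfolding Wset_def using finite_Mset finite_Pt by auto
qed (use Phi_props[OF assms] in auto)



lemma binom2_A: "2 * binom2 d + d = d*d"
proof -
  have "even (d*(d-1))" by auto
  then have "2 * binom2 d = d*(d-1)" unfolding binom2_def by simp
  then show ?thesis by (simp add: algebra_simps)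
qed

lemma binom2_B: "2 * binom2 e = e*(e-1)"
proof -
  have "even (e*(e-1))" by auto
  then show ?thesis unfolding binom2_def by simp
qed

lemma ee_ge1: "\<bar>e::int\<bar> \<le> e*(e-1) + 1"
proof -
  define q where "q = e*e"
  have a1: "e*(e-1) = q - e" unfolding q_def by (simp add: algebra_simps)
  have a2: "0 \<le> q - 2*e + 1"
  proof -
    have "(e-1)*(e-1) = q - 2*e + 1" unfolding q_def by (simp add: algebra_simps)
    moreover have "0 \<le> (e-1)*(e-1)" by simp
    ultimately show ?thesis by simp
  qed
  have a3: "0 \<le> q" unfolding q_def by simp
  show ?thesis unfolding a1 using a2 a3 by linarith
qed

lemma ee_ge2: "0 \<le> (e::int)*(e-1)"
proof -
  define q where "q = e*e"
  have a1: "e*(e-1) = q - e" unfolding q_def by (simp add: algebra_simps)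
  have "\<bar>e\<bar> \<le> q" unfolding q_def by (rule abs_le_sq)
  then show ?thesis unfolding a1 by linarith
qed

lemmas ee_ge = ee_ge1 ee_ge2

lemma finite_Aset: "finite (Aset n)"
proof -
  have "Aset n \<subseteq> {-\<bar>n\<bar>..\<bar>n\<bar>} \<times> {-\<bar>n\<bar>..\<bar>n\<bar>}"
  proof clarify
    fix d1 d2 assume "(d1,d2) \<in> Aset n"
    then have e: "d1*d1 + 11*(d2*d2) = n" unfolding Aset_def by auto
    have "0 \<le> d1*d1" "0 \<le> d2*d2" by simp_all
    then show "d1 \<in> {-\<bar>n\<bar>..\<bar>n\<bar>} \<and> d2 \<in> {-\<bar>n\<bar>..\<bar>n\<bar>}"
      using abs_le_sq[of d1] abs_le_sq[of d2] e by auto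
  qed
  then show ?thesis by (rule finite_subset) auto
qed

lemma finite_Bset: "finite (Bset n)"
proof -
  have "Bset n \<subseteq> {-\<bar>n\<bar>..\<bar>n\<bar>} \<times> {-\<bar>n\<bar>..\<bar>n\<bar>}"
  proof clarify
    fix d1 d2 assume "(d1,d2) \<in> Bset n"
    then have e: "d1*(d1-1) + 11*(d2*(d2-1)) + 3 = n" unfolding Bset_def by auto
    then show "d1 \<in> {-\<bar>n\<bar>..\<bar>n\<bar>} \<and> d2 \<in> {-\<bar>n\<bar>..\<bar>n\<bar>}"
      using ee_ge[of d1] ee_ge[of d2] e by auto
  qed
  then show ?thesis by (rule finite_subset) auto
qed

definition "wt = (\<lambda>(m1,m2). 2*psize m1 + 22*psize m2)"

lemma card_LHS:
  "card {(\<mu>1, \<mu>2, d1, d2) | \<mu>1 \<mu>2 (d1::int) (d2::int).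
            \<mu>1 \<in> Partitions \<and> \<mu>2 \<in> Partitions \<and> odd (d1 + d2) \<and>
            2 * psize \<mu>1 + 22 * psize \<mu>2 + 2 * binom2 d1 + 22 * binom2 d2 + d1 + 11 * d2 = N}
   = (\<Sum>m\<in>Mset N. card (Aset (N - wt m)))"
proof -
  let ?f = "\<lambda>((m1::nat list,m2::nat list),(d1::int,d2::int)). (m1,m2,d1,d2)"
  let ?S = "Sigma (Mset N) (\<lambda>m. Aset (N - wt m))"
  have eq: "2 * psize m1 + 22 * psize m2 + 2 * binom2 d1 + 22 * binom2 d2 + d1 + 11 * d2
      = 2 * psize m1 + 22 * psize m2 + (d1*d1 + 11*(d2*d2))" for m1 m2 d1 d2
    using binom2_A[of d1] binom2_A[of d2] by (simp add: algebra_simps)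
  have "{(\<mu>1, \<mu>2, d1, d2) | \<mu>1 \<mu>2 (d1::int) (d2::int).
            \<mu>1 \<in> Partitions \<and> \<mu>2 \<in> Partitions \<and> odd (d1 + d2) \<and>
            2 * psize \<mu>1 + 22 * psize \<mu>2 + 2 * binom2 d1 + 22 * binom2 d2 + d1 + 11 * d2 = N} = ?f ` ?S"
  proof (rule set_eqI, rule iffI)
    fix x assume "x \<in> {(\<mu>1, \<mu>2, d1, d2) | \<mu>1 \<mu>2 (d1::int) (d2::int).
            \<mu>1 \<in> Partitions \<and> \<mu>2 \<in> Partitions \<and> odd (d1 + d2) \<and>
            2 * psize \<mu>1 + 22 * psize \<mu>2 + 2 * binom2 d1 + 22 * binom2 d2 + d1 + 11 * d2 = N}"
    then obtain m1 m2 d1 d2 where h: "x = (m1,m2,d1,d2)" "m1 \<in> Partitions" "m2 \<in> Partitions" "odd (d1+d2)"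
      "2 * psize m1 + 22 * psize m2 + (d1*d1 + 11*(d2*d2)) = N" unfolding eq by blast
    have "0 \<le> d1*d1" "0 \<le> d2*d2" by simp_all
    then have "((m1,m2),(d1,d2)) \<in> ?S" using h unfolding Mset_def Aset_def wt_def by auto
    then show "x \<in> ?f ` ?S" using h(1) by force
  next
    fix x assume "x \<in> ?f ` ?S"
    then obtain m1 m2 d1 d2 where h: "x = (m1,m2,d1,d2)" "((m1,m2),(d1,d2)) \<in> ?S" by force
    then show "x \<in> {(\<mu>1, \<mu>2, d1, d2) | \<mu>1 \<mu>2 (d1::int) (d2::int).
            \<mu>1 \<in> Partitions \<and> \<mu>2 \<in> Partitions \<and> odd (d1 + d2) \<and>
            2 * psize \<mu>1 + 22 * psize \<mu>2 + 2 * binom2 d1 + 22 * binom2 d2 + d1 + 11 * d2 = N}"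
      unfolding eq using h unfolding Mset_def Aset_def wt_def by auto
  qed
  moreover have "inj_on ?f ?S" by (rule inj_onI) auto
  ultimately have "card {(\<mu>1, \<mu>2, d1, d2) | \<mu>1 \<mu>2 (d1::int) (d2::int).
            \<mu>1 \<in> Partitions \<and> \<mu>2 \<in> Partitions \<and> odd (d1 + d2) \<and>
            2 * psize \<mu>1 + 22 * psize \<mu>2 + 2 * binom2 d1 + 22 * binom2 d2 + d1 + 11 * d2 = N} = card ?S"
    by (simp add: card_image)
  also have "\<dots> = (\<Sum>m\<in>Mset N. card (Aset (N - wt m)))"
    using finite_Mset finite_Aset by (simp add: card_SigmaI)
  finally show ?thesis .
qed



lemma card_RHS:
  "card {(\<alpha>1, \<alpha>2, e1, e2) | \<alpha>1 \<alpha>2 (e1::int) (e2::int).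
            \<alpha>1 \<in> Partitions \<and> \<alpha>2 \<in> Partitions \<and> odd (e1 + e2) \<and>
            2 * psize \<alpha>1 + 22 * psize \<alpha>2 + 2 * binom2 e1 + 22 * binom2 e2 + 3 = N}
   = (\<Sum>m\<in>Mset N. card (Bset (N - wt m)))"
proof -
  let ?f = "\<lambda>((m1::nat list,m2::nat list),(d1::int,d2::int)). (m1,m2,d1,d2)"
  let ?S = "Sigma (Mset N) (\<lambda>m. Bset (N - wt m))"
  have eq: "2 * psize m1 + 22 * psize m2 + 2 * binom2 d1 + 22 * binom2 d2 + 3
      = 2 * psize m1 + 22 * psize m2 + (d1*(d1-1) + 11*(d2*(d2-1)) + 3)" for m1 m2 d1 d2
    using binom2_B[of d1] binom2_B[of d2] by (simp add: algebra_simps)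
  have "{(\<alpha>1, \<alpha>2, e1, e2) | \<alpha>1 \<alpha>2 (e1::int) (e2::int).
            \<alpha>1 \<in> Partitions \<and> \<alpha>2 \<in> Partitions \<and> odd (e1 + e2) \<and>
            2 * psize \<alpha>1 + 22 * psize \<alpha>2 + 2 * binom2 e1 + 22 * binom2 e2 + 3 = N} = ?f ` ?S"
  proof (rule set_eqI, rule iffI)
    fix x assume "x \<in> {(\<alpha>1, \<alpha>2, e1, e2) | \<alpha>1 \<alpha>2 (e1::int) (e2::int).
            \<alpha>1 \<in> Partitions \<and> \<alpha>2 \<in> Partitions \<and> odd (e1 + e2) \<and>
            2 * psize \<alpha>1 + 22 * psize \<alpha>2 + 2 * binom2 e1 + 22 * binom2 e2 + 3 = N}"
    then obtain m1 m2 d1 d2 where h: "x = (m1,m2,d1,d2)" "m1 \<in> Partitions" "m2 \<in> Partitions" "odd (d1+d2)"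
      "2 * psize m1 + 22 * psize m2 + (d1*(d1-1) + 11*(d2*(d2-1)) + 3) = N" unfolding eq by blast
    have "0 \<le> d1*(d1-1)" "0 \<le> d2*(d2-1)" by (rule ee_ge2)+
    then have "((m1,m2),(d1,d2)) \<in> ?S" using h unfolding Mset_def Bset_def wt_def by auto
    then show "x \<in> ?f ` ?S" using h(1) by force
  next
    fix x assume "x \<in> ?f ` ?S"
    then obtain m1 m2 d1 d2 where h: "x = (m1,m2,d1,d2)" "((m1,m2),(d1,d2)) \<in> ?S" by force
    then show "x \<in> {(\<alpha>1, \<alpha>2, e1, e2) | \<alpha>1 \<alpha>2 (e1::int) (e2::int).
            \<alpha>1 \<in> Partitions \<and> \<alpha>2 \<in> Partitions \<and> odd (e1 + e2) \<and>
            2 * psize \<alpha>1 + 22 * psize \<alpha>2 + 2 * binom2 e1 + 22 * binom2 e2 + 3 = N}"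
      unfolding eq using h unfolding Mset_def Bset_def wt_def by auto
  qed
  moreover have "inj_on ?f ?S" by (rule inj_onI) auto
  ultimately have "card {(\<alpha>1, \<alpha>2, e1, e2) | \<alpha>1 \<alpha>2 (e1::int) (e2::int).
            \<alpha>1 \<in> Partitions \<and> \<alpha>2 \<in> Partitions \<and> odd (e1 + e2) \<and>
            2 * psize \<alpha>1 + 22 * psize \<alpha>2 + 2 * binom2 e1 + 22 * binom2 e2 + 3 = N} = card ?S"
    by (simp add: card_image)
  also have "\<dots> = (\<Sum>m\<in>Mset N. card (Bset (N - wt m)))"
    using finite_Mset finite_Bset by (simp add: card_SigmaI)
  finally show ?thesis .
qed

lemma sum_W: "(\<Sum>x\<in>Wset N. sg (snd x)) = (\<Sum>m\<in>Mset N. sum sg (Pt (N - wt m)))"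
proof -
  have w: "Wset N = Sigma (Mset N) (\<lambda>m. Pt (N - wt m))"
    unfolding Wset_def wt_def by (auto simp: algebra_simps)
  have "(\<Sum>m\<in>Mset N. sum sg (Pt (N - wt m))) = (\<Sum>(m,y)\<in>Sigma (Mset N) (\<lambda>m. Pt (N - wt m)). sg y)"
    by (rule sum.Sigma[OF finite_Mset]) (simp add: finite_Pt)
  also have "\<dots> = (\<Sum>x\<in>Wset N. sg (snd x))" unfolding w by (rule sum.cong) auto
  finally show ?thesis by simp
qed

theorem lemma3p12:
  fixes N :: int
  assumes "N \<ge> 3"
  shows "card {(\<mu>1, \<mu>2, d1, d2) | \<mu>1 \<mu>2 (d1::int) (d2::int).
            \<mu>1 \<in> Partitions \<and> \<mu>2 \<in> Partitions \<and> odd (d1 + d2) \<and>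
            2 * psize \<mu>1 + 22 * psize \<mu>2 + 2 * binom2 d1 + 22 * binom2 d2 + d1 + 11 * d2 = N}
       = card {(\<alpha>1, \<alpha>2, e1, e2) | \<alpha>1 \<alpha>2 (e1::int) (e2::int).
            \<alpha>1 \<in> Partitions \<and> \<alpha>2 \<in> Partitions \<and> odd (e1 + e2) \<and>
            2 * psize \<alpha>1 + 22 * psize \<alpha>2 + 2 * binom2 e1 + 22 * binom2 e2 + 3 = N}"
proof -
  have "int (\<Sum>m\<in>Mset N. card (Aset (N - wt m))) - int (\<Sum>m\<in>Mset N. card (Bset (N - wt m)))
      = (\<Sum>m\<in>Mset N. int (card (Aset (N - wt m))) - int (card (Bset (N - wt m))))"
    by (simp add: sum_subtractf)
  also have "\<dots> = (\<Sum>m\<in>Mset N. 2 * sum sg (Pt (N - wt m)))"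
    using lattice_identity by simp
  also have "\<dots> = 2 * (\<Sum>x\<in>Wset N. sg (snd x))" by (simp add: sum_W sum_distrib_left)
  also have "\<dots> = 0" using Wset_sum_zero[of N] assms by simp
  finally have "int (\<Sum>m\<in>Mset N. card (Aset (N - wt m))) = int (\<Sum>m\<in>Mset N. card (Bset (N - wt m)))"
    by linarith
  then have "(\<Sum>m\<in>Mset N. card (Aset (N - wt m))) = (\<Sum>m\<in>Mset N. card (Bset (N - wt m)))"
    by (simp only: of_nat_eq_iff)
  then show ?thesis unfolding card_LHS card_RHS .
qed


end
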